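(* There exist universal constants $C,C'>0$ such that for every $m>0$, every $\beta\in(0,1/3)$, every $\epsilon\in(0,1)$, every odd $n\in\mathbb{N}$ with $n\epsilon\ge C\ln(1/\beta)$, and every $D\in\mathcal{CTM}$, setting $\alpha^*=1/(n\epsilon)$, with probability at least $1-\beta$, $$p_{\alpha^*}(D,\mathtt{DPExpMed}_{\alpha^*}(D))\le\frac{C'}{\epsilon}\ln\frac1\beta.$$
   Context: $V=[-m/2,m/2]$. A dataset is $D=(x_1,\dots,x_n)\in V^n$, indexed so that $x_1\le\dots\le x_n$, with median $\mathcal{T}(D)=x_{\lceil n/2\rceil}$. $\mathcal{CTM}$ is the set of datasets with $|x_{i+1}-x_i|\ge|x_{j+1}-x_j|$ for all $1\le i<j\le\lceil n/2\rceil-1$ and $|x_i-x_{i-1}|\ge|x_j-x_{j-1}|$ for all $\lceil n/2\rceil+1\le j<i\le n$. The percentile loss $q(D,a)$ for $a\in V$ is: $\min\{|\lceil n/2\rceil-i|: a\in[x_i,\mathcal{T}(D)]\}$ if $a\in[x_1,\mathcal{T}(D)]$; $\min\{|\lceil n/2\rceil-i|: a\in[\mathcal{T}(D),x_i]\}$ if $a\in(\mathcal{T}(D),x_n]$; $\lceil n/2\rceil$ otherwise. The widened loss is $p_\alpha(D,\ell)=\min_{a\in V:|a-\ell|\le\alpha m}q(D,a)$. $\mathtt{DPExpMed}_\alpha(D)$ is the random point of $V$ with density proportional to $\exp(-\frac{\epsilon}{2}p_\alpha(D,\ell))$. *)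

theory Defs
  imports "HOL-Analysis.Analysis"
begin

text \<open>A dataset of size n is a function x :: nat => real on indices 1..n
  (values outside are irrelevant), sorted, with values in V = [-m/2, m/2].\<close>

definition Vset :: "real \<Rightarrow> real set" where
  "Vset m = {-m/2 .. m/2}"

definition midx :: "nat \<Rightarrow> nat" where
  "midx n = nat \<lceil>real n / 2\<rceil>"

definition is_dataset :: "real \<Rightarrow> nat \<Rightarrow> (nat \<Rightarrow> real) \<Rightarrow> bool" where
  "is_dataset m n x \<longleftrightarrow> (\<forall>i\<in>{1..n}. x i \<in> Vset m) \<and>
     (\<forall>i j. 1 \<le> i \<longrightarrow> i \<le> j \<longrightarrow> j \<le> n \<longrightarrow> x i \<le> x j)"

definition median :: "nat \<Rightarrow> (nat \<Rightarrow> real) \<Rightarrow> real" where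
  "median n x = x (midx n)"

definition in_CTM :: "real \<Rightarrow> nat \<Rightarrow> (nat \<Rightarrow> real) \<Rightarrow> bool" where
  "in_CTM m n x \<longleftrightarrow> is_dataset m n x \<and>
     (\<forall>i j. 1 \<le> i \<longrightarrow> i < j \<longrightarrow> j \<le> midx n - 1 \<longrightarrow>
        \<bar>x (i+1) - x i\<bar> \<ge> \<bar>x (j+1) - x j\<bar>) \<and>
     (\<forall>i j. midx n + 1 \<le> j \<longrightarrow> j < i \<longrightarrow> i \<le> n \<longrightarrow>
        \<bar>x i - x (i-1)\<bar> \<ge> \<bar>x j - x (j-1)\<bar>)"

definition idist :: "nat \<Rightarrow> nat \<Rightarrow> nat" where
  "idist k i = nat \<bar>int k - int i\<bar>"

definition qloss :: "nat \<Rightarrow> (nat \<Rightarrow> real) \<Rightarrow> real \<Rightarrow> nat" where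
  "qloss n x a =
    (if x 1 \<le> a \<and> a \<le> median n x then
       Min {idist (midx n) i | i. i \<in> {1..n} \<and> x i \<le> a \<and> a \<le> median n x}
     else if median n x < a \<and> a \<le> x n then
       Min {idist (midx n) i | i. i \<in> {1..n} \<and> median n x \<le> a \<and> a \<le> x i}
     else midx n)"

definition ploss :: "real \<Rightarrow> nat \<Rightarrow> (nat \<Rightarrow> real) \<Rightarrow> real \<Rightarrow> real \<Rightarrow> nat" where
  "ploss m n x \<alpha> l = Inf {qloss n x a | a. a \<in> Vset m \<and> \<bar>a - l\<bar> \<le> \<alpha> * m}"

text \<open>Unnormalised density of DPExpMed_alpha(D) on V.\<close>
definition expmed_weight :: "real \<Rightarrow> real \<Rightarrow> nat \<Rightarrow> (nat \<Rightarrow> real) \<Rightarrow> real \<Rightarrow> real \<Rightarrow> real" where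
  "expmed_weight \<epsilon> m n x \<alpha> l = exp (- (\<epsilon> / 2) * real (ploss m n x \<alpha> l))"

text \<open>Probability that DPExpMed_alpha(D) lies in S (density normalised over V).\<close>
definition expmed_prob ::
  "real \<Rightarrow> real \<Rightarrow> nat \<Rightarrow> (nat \<Rightarrow> real) \<Rightarrow> real \<Rightarrow> real set \<Rightarrow> real" where
  "expmed_prob \<epsilon> m n x \<alpha> S =
     integral (Vset m \<inter> S) (expmed_weight \<epsilon> m n x \<alpha>) / integral (Vset m) (expmed_weight \<epsilon> m n x \<alpha>)"

end

theory Submission
  imports Defs "HOL-Analysis.Analysis"
begin


lemma midx_odd: assumes "odd n" shows "2 * midx n = n + 1"
proof -
  obtain t where t: "n = 2*t+1" using assms oddE by blast
  have "\<lceil>real n / 2\<rceil> = int t + 1"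
    unfolding t by (intro ceiling_unique) auto
  then show ?thesis unfolding midx_def t by simp
qed

lemma tele_le:
  fixes x :: "nat \<Rightarrow> real"
  assumes "\<And>i. a \<le> i \<Longrightarrow> i < b \<Longrightarrow> x (Suc i) - x i \<le> G" "a \<le> b"
  shows "x b - x a \<le> real (b - a) * G"
  using assms
proof (induction b)
  case 0 then show ?case by simp
next
  case (Suc b)
  show ?case
  proof (cases "a = Suc b")
    case True then show ?thesis by simp
  next
    case False
    then have ab: "a \<le> b" using Suc by simp
    have "x b - x a \<le> real (b - a) * G" using Suc ab by simp
    moreover have "x (Suc b) - x b \<le> G" using Suc ab by simp
    ultimately show ?thesis using ab by (simp add: Suc_diff_le algebra_simps)
  qed
qed

lemma tele_ge:
  fixes x :: "nat \<Rightarrow> real"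
  assumes "\<And>i. a \<le> i \<Longrightarrow> i < b \<Longrightarrow> x (Suc i) - x i \<ge> G" "a \<le> b"
  shows "x b - x a \<ge> real (b - a) * G"
proof -
  have "(-x) b - (-x) a \<le> real (b - a) * (-G)"
  proof (rule tele_le)
    fix i assume "a \<le> i" "i < b"
    then have "x (Suc i) - x i \<ge> G" using assms(1) by blast
    then show "(-x) (Suc i) - (-x) i \<le> - G" by simp
  qed (use assms in auto)
  then show ?thesis by simp
qed

lemma ds_mono: "is_dataset m n x \<Longrightarrow> 1 \<le> i \<Longrightarrow> i \<le> j \<Longrightarrow> j \<le> n \<Longrightarrow> x i \<le> x j"
  unfolding is_dataset_def by blast

lemma ds_V: "is_dataset m n x \<Longrightarrow> 1 \<le> i \<Longrightarrow> i \<le> n \<Longrightarrow> x i \<in> Vset m"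
  unfolding is_dataset_def by auto

lemma ctm_left:
  assumes ctm: "in_CTM m n x" and odd: "odd n" and j: "j \<le> midx n - 1"
  shows "real (midx n - 1) * (x (midx n) - x (midx n - j)) \<le> real j * (x (midx n) - x 1)"
proof -
  define k where "k = midx n"
  have kn: "2 * k = n + 1" using midx_odd[OF odd] k_def by simp
  have ds: "is_dataset m n x" using ctm in_CTM_def by blast
  have C: "\<And>i j. 1 \<le> i \<Longrightarrow> i < j \<Longrightarrow> j \<le> k - 1 \<Longrightarrow> \<bar>x (i+1) - x i\<bar> \<ge> \<bar>x (j+1) - x j\<bar>"
    using ctm unfolding in_CTM_def k_def by blast
  have gap: "\<And>i. 1 \<le> i \<Longrightarrow> i \<le> k - 1 \<Longrightarrow> \<bar>x (i+1) - x i\<bar> = x (i+1) - x i"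
  proof -
    fix i assume "1 \<le> i" "i \<le> k - 1"
    then have "x i \<le> x (i+1)" using ds_mono[OF ds, of i "i+1"] kn by linarith
    then show "\<bar>x (i+1) - x i\<bar> = x (i+1) - x i" by simp
  qed
  show ?thesis
  proof (cases "j = 0")
    case True then show ?thesis by simp
  next
    case False
    define s where "s = k - j"
    have s1: "1 \<le> s" "s \<le> k - 1" using False j k_def s_def by auto
    define G where "G = x (s+1) - x s"
    have G0: "G \<ge> 0" using gap[of s] s1 abs_ge_zero G_def by metis
    have D: "x k - x s \<le> real (k - s) * G"
    proof (rule tele_le)
      fix i assume "s \<le> i" "i < k"
      then show "x (Suc i) - x i \<le> G"
      proof (cases "i = s")
        case True then show ?thesis by (simp add: G_def)
      next
        case False
        then show ?thesis using C[of s i] gap[of s] gap[of i] s1 \<open>s \<le> i\<close> \<open>i < k\<close> G_def by simp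
      qed
    qed (use s1 in auto)
    have E: "x s - x 1 \<ge> real (s - 1) * G"
    proof (rule tele_ge)
      fix i assume "1 \<le> i" "i < s"
      then show "x (Suc i) - x i \<ge> G"
        using C[of i s] gap[of s] gap[of i] s1 G_def by simp
    qed (use s1 in auto)
    have ks: "k - s = j" using s_def j k_def by simp
    have km: "real (k - 1) = real (s - 1) + real j" using s1 ks by linarith
    have "real (s - 1) * (x k - x s) \<le> real (s-1) * (real j * G)"
      using D ks by (intro mult_left_mono) auto
    also have "\<dots> = real j * (real (s - 1) * G)" by simp
    also have "\<dots> \<le> real j * (x s - x 1)" using E by (intro mult_left_mono) auto
    finally have "real (s - 1) * (x k - x s) \<le> real j * (x s - x 1)" .
    then show ?thesis unfolding k_def[symmetric] s_def[symmetric] km by (simp add: algebra_simps)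
  qed
qed

lemma ctm_right:
  assumes ctm: "in_CTM m n x" and odd: "odd n" and j: "j \<le> midx n - 1"
  shows "real (midx n - 1) * (x (midx n + j) - x (midx n)) \<le> real j * (x n - x (midx n))"
proof -
  define k where "k = midx n"
  have kn: "2 * k = n + 1" using midx_odd[OF odd] k_def by simp
  have ds: "is_dataset m n x" using ctm in_CTM_def by blast
  have C: "\<And>i j. k + 1 \<le> j \<Longrightarrow> j < i \<Longrightarrow> i \<le> n \<Longrightarrow> \<bar>x i - x (i-1)\<bar> \<ge> \<bar>x j - x (j-1)\<bar>"
    using ctm unfolding in_CTM_def k_def by blast
  have gap: "\<And>i. k + 1 \<le> i \<Longrightarrow> i \<le> n \<Longrightarrow> \<bar>x i - x (i-1)\<bar> = x i - x (i-1)"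
  proof -
    fix i assume "k + 1 \<le> i" "i \<le> n"
    then have "x (i-1) \<le> x i" using ds_mono[OF ds, of "i-1" i] kn by linarith
    then show "\<bar>x i - x (i-1)\<bar> = x i - x (i-1)" by simp
  qed
  show ?thesis
  proof (cases "j = 0")
    case True then show ?thesis by simp
  next
    case False
    define t where "t = k + j"
    have t1: "k + 1 \<le> t" "t \<le> n" using False j k_def t_def kn by auto
    define G where "G = x t - x (t - 1)"
    have G0: "G \<ge> 0" using gap[of t] t1 abs_ge_zero G_def by metis
    have D: "x t - x k \<le> real (t - k) * G"
    proof (rule tele_le)
      fix i assume "k \<le> i" "i < t"
      then show "x (Suc i) - x i \<le> G"
      proof (cases "Suc i = t")
        case True then have "i = t - 1" by simp
        then show ?thesis using True by (simp add: G_def)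
      next
        case False
        then show ?thesis using C[of "Suc i" t] gap[of t] gap[of "Suc i"] t1 \<open>k \<le> i\<close> \<open>i < t\<close> G_def by simp
      qed
    qed (use t1 in auto)
    have E: "x n - x t \<ge> real (n - t) * G"
    proof (rule tele_ge)
      fix i assume "t \<le> i" "i < n"
      then show "x (Suc i) - x i \<ge> G"
        using C[of t "Suc i"] gap[of t] gap[of "Suc i"] t1 G_def by simp
    qed (use t1 in auto)
    have ks: "t - k = j" using t_def by simp
    have km: "real (k - 1) = real (n - t) + real j" using t1 ks kn t_def by linarith
    have "real (n - t) * (x t - x k) \<le> real (n - t) * (real j * G)"
      using D ks by (intro mult_left_mono) auto
    also have "\<dots> = real j * (real (n - t) * G)" by simp
    also have "\<dots> \<le> real j * (x n - x t)" using E by (intro mult_left_mono) auto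
    finally have "real (n - t) * (x t - x k) \<le> real j * (x n - x t)" .
    then show ?thesis unfolding k_def[symmetric] t_def[symmetric] km by (simp add: algebra_simps)
  qed
qed



lemma fin_set: "finite {idist k i | i. i \<in> {1..n} \<and> P i}"
  by (rule finite_subset[of _ "idist k ` {1..n}"]) auto

lemma kbounds: assumes "odd n" shows "1 \<le> midx n" "midx n \<le> n" "n = 2 * midx n - 1"
  using midx_odd[OF assms] by auto

lemma q_le:
  assumes ds: "is_dataset m n x" and odd: "odd n"
  shows "qloss n x a \<le> midx n"
proof -
  note kb = kbounds[OF odd]
  show ?thesis
  proof (cases "x 1 \<le> a \<and> a \<le> median n x")
    case True
    have "idist (midx n) 1 \<in> {idist (midx n) i | i. i \<in> {1..n} \<and> x i \<le> a \<and> a \<le> median n x}"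
      using True kb by auto
    then have "Min {idist (midx n) i | i. i \<in> {1..n} \<and> x i \<le> a \<and> a \<le> median n x} \<le> idist (midx n) 1"
      by (intro Min_le fin_set)
    moreover have "idist (midx n) 1 \<le> midx n" unfolding idist_def using kb by (auto simp: abs_if nat_le_iff)
    ultimately show ?thesis using True unfolding qloss_def by simp
  next
    case F: False
    show ?thesis
    proof (cases "median n x < a \<and> a \<le> x n")
      case True
      have "idist (midx n) n \<in> {idist (midx n) i | i. i \<in> {1..n} \<and> median n x \<le> a \<and> a \<le> x i}"
        using True kb by auto
      then have "Min {idist (midx n) i | i. i \<in> {1..n} \<and> median n x \<le> a \<and> a \<le> x i} \<le> idist (midx n) n"
        by (intro Min_le fin_set)
      moreover have "idist (midx n) n \<le> midx n" unfolding idist_def using kb by simp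
      ultimately show ?thesis using True F unfolding qloss_def by simp
    next
      case False then show ?thesis using F unfolding qloss_def by auto
    qed
  qed
qed

lemma q_med:
  assumes ds: "is_dataset m n x" and odd: "odd n"
  shows "qloss n x (x (midx n)) = 0"
proof -
  note kb = kbounds[OF odd]
  have c: "x 1 \<le> x (midx n) \<and> x (midx n) \<le> median n x"
    using ds_mono[OF ds, of 1 "midx n"] kb unfolding median_def by simp
  have "idist (midx n) (midx n) \<in> {idist (midx n) i | i. i \<in> {1..n} \<and> x i \<le> x (midx n) \<and> x (midx n) \<le> median n x}"
    using c kb by auto
  then have "Min {idist (midx n) i | i. i \<in> {1..n} \<and> x i \<le> x (midx n) \<and> x (midx n) \<le> median n x} \<le> idist (midx n) (midx n)"
    by (rule Min_le[OF fin_set])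
  then have "Min {idist (midx n) i | i. i \<in> {1..n} \<and> x i \<le> x (midx n) \<and> x (midx n) \<le> median n x} \<le> 0"
    by (simp add: idist_def)
  then show ?thesis using c unfolding qloss_def by simp
qed

lemma q_mono_left:
  assumes ds: "is_dataset m n x" and odd: "odd n" and aa: "a \<le> a'" and a': "a' \<le> x (midx n)"
  shows "qloss n x a' \<le> qloss n x a"
proof (cases "x 1 \<le> a")
  case True
  note kb = kbounds[OF odd]
  let ?S = "\<lambda>a. {idist (midx n) i | i. i \<in> {1..n} \<and> x i \<le> a \<and> a \<le> median n x}"
  have c: "x 1 \<le> a \<and> a \<le> median n x" "x 1 \<le> a' \<and> a' \<le> median n x"
    using True aa a' unfolding median_def by auto
  have "idist (midx n) 1 \<in> ?S a" using c kb by auto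
  then have ne: "?S a \<noteq> {}" by blast
  have sub: "?S a \<subseteq> ?S a'" using aa c by auto
  have "Min (?S a') \<le> Min (?S a)" by (rule Min_antimono[OF sub ne fin_set])
  then show ?thesis using c unfolding qloss_def by simp
next
  case False
  then have "qloss n x a = midx n" using aa a' unfolding qloss_def median_def by auto
  then show ?thesis using q_le[OF ds odd] by simp
qed

lemma q_mono_right:
  assumes ds: "is_dataset m n x" and odd: "odd n" and aa: "a \<le> a'" and a: "x (midx n) \<le> a"
  shows "qloss n x a \<le> qloss n x a'"
proof (cases "a = x (midx n)")
  case True then show ?thesis using q_med[OF ds odd] by simp
next
  case False
  note kb = kbounds[OF odd]
  show ?thesis
  proof (cases "a' \<le> x n")
    case True
    let ?S = "\<lambda>a. {idist (midx n) i | i. i \<in> {1..n} \<and> median n x \<le> a \<and> a \<le> x i}"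
    have c: "median n x < a \<and> a \<le> x n" "median n x < a' \<and> a' \<le> x n"
      using True aa a False unfolding median_def by auto
    have ne: "?S a' \<noteq> {}" using c kb by auto
    have sub: "?S a' \<subseteq> ?S a" using aa c by auto
    have "Min (?S a) \<le> Min (?S a')" by (rule Min_antimono[OF sub ne fin_set])
    then show ?thesis using c unfolding qloss_def by simp
  next
    case F: False
    then have "qloss n x a' = midx n" using aa a False unfolding qloss_def median_def by auto
    then show ?thesis using q_le[OF ds odd] by simp
  qed
qed

lemma q_left_bound:
  assumes ds: "is_dataset m n x" and odd: "odd n" and a: "a < x (midx n)" and q: "qloss n x a < midx n"
  shows "qloss n x a \<le> midx n - 1 \<and> x (midx n - qloss n x a) \<le> a"
proof -
  note kb = kbounds[OF odd]
  let ?S = "{idist (midx n) i | i. i \<in> {1..n} \<and> x i \<le> a \<and> a \<le> median n x}"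
  have c: "x 1 \<le> a \<and> a \<le> median n x"
    using q a unfolding qloss_def median_def by (auto split: if_splits)
  have "idist (midx n) 1 \<in> ?S" using c kb by auto
  then have ne: "?S \<noteq> {}" by blast
  have "qloss n x a = Min ?S" using c unfolding qloss_def by simp
  also have "Min ?S \<in> ?S" by (rule Min_in[OF fin_set ne])
  finally obtain i where i: "i \<in> {1..n}" "x i \<le> a" "qloss n x a = idist (midx n) i" by auto
  have "i < midx n"
  proof (rule ccontr)
    assume "\<not> i < midx n"
    then have "x (midx n) \<le> x i" using ds_mono[OF ds, of "midx n" i] kb i by simp
    then show False using i a by simp
  qed
  then have "qloss n x a = midx n - i" using i unfolding idist_def by simp
  then show ?thesis using i \<open>i < midx n\<close> by auto
qed

lemma q_right_bound:
  assumes ds: "is_dataset m n x" and odd: "odd n" and a: "x (midx n) < a" and q: "qloss n x a < midx n"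
  shows "qloss n x a \<le> midx n - 1 \<and> a \<le> x (midx n + qloss n x a)"
proof -
  note kb = kbounds[OF odd]
  let ?S = "{idist (midx n) i | i. i \<in> {1..n} \<and> median n x \<le> a \<and> a \<le> x i}"
  have c: "median n x < a \<and> a \<le> x n"
    using q a unfolding qloss_def median_def by (auto split: if_splits)
  have ne: "?S \<noteq> {}" using c kb by auto
  have "qloss n x a = Min ?S" using c a unfolding qloss_def median_def by simp
  also have "Min ?S \<in> ?S" by (rule Min_in[OF fin_set ne])
  finally obtain i where i: "i \<in> {1..n}" "a \<le> x i" "qloss n x a = idist (midx n) i" by auto
  have "midx n < i"
  proof (rule ccontr)
    assume "\<not> midx n < i"
    then have "x i \<le> x (midx n)" using ds_mono[OF ds, of i "midx n"] kb i by simp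
    then show False using i a by simp
  qed
  then have "qloss n x a = i - midx n" using i unfolding idist_def by simp
  then show ?thesis using i \<open>midx n < i\<close> kb by auto
qed



lemma p_le_q:
  assumes "a \<in> Vset m" "\<bar>a - l\<bar> \<le> \<alpha> * m"
  shows "ploss m n x \<alpha> l \<le> qloss n x a"
  unfolding ploss_def by (rule cInf_lower) (use assms in auto)

lemma p_attained:
  assumes "l \<in> Vset m" "\<alpha> * m \<ge> 0"
  shows "\<exists>a. a \<in> Vset m \<and> \<bar>a - l\<bar> \<le> \<alpha> * m \<and> ploss m n x \<alpha> l = qloss n x a"
proof -
  let ?S = "{qloss n x a | a. a \<in> Vset m \<and> \<bar>a - l\<bar> \<le> \<alpha> * m}"
  have "?S \<noteq> {}" using assms by auto
  then have "Inf ?S \<in> ?S" by (rule Inf_nat_def1)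
  then show ?thesis unfolding ploss_def by auto
qed

lemma p_mid:
  assumes ds: "is_dataset m n x" and odd: "odd n" and l: "\<bar>l - x (midx n)\<bar> \<le> \<alpha> * m"
  shows "ploss m n x \<alpha> l = 0"
proof -
  note kb = kbounds[OF odd]
  have "x (midx n) \<in> Vset m" using ds_V[OF ds] kb by simp
  then have "ploss m n x \<alpha> l \<le> qloss n x (x (midx n))" using l by (intro p_le_q) auto
  then show ?thesis using q_med[OF ds odd] by simp
qed

lemma p_mono_left:
  assumes ds: "is_dataset m n x" and odd: "odd n" and am: "\<alpha> * m \<ge> 0"
    and ll: "l \<le> l'" "l' \<le> x (midx n)" and lV: "l \<in> Vset m" "l' \<in> Vset m"
  shows "ploss m n x \<alpha> l' \<le> ploss m n x \<alpha> l"
proof -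
  obtain a where a: "a \<in> Vset m" "\<bar>a - l\<bar> \<le> \<alpha> * m" "ploss m n x \<alpha> l = qloss n x a"
    using p_attained[OF lV(1) am] by blast
  show ?thesis
  proof (cases "\<bar>a - l'\<bar> \<le> \<alpha> * m")
    case True then show ?thesis using p_le_q[OF a(1) True] a by simp
  next
    case False
    then have al: "a < l' - \<alpha> * m" using a ll by auto
    have a'V: "l' - \<alpha> * m \<in> Vset m" using a(1) lV(2) al am unfolding Vset_def by auto
    have "ploss m n x \<alpha> l' \<le> qloss n x (l' - \<alpha> * m)" using a'V am by (intro p_le_q) auto
    also have "\<dots> \<le> qloss n x a" using al am ll by (intro q_mono_left[OF ds odd]) auto
    finally show ?thesis using a by simp
  qed
qed

lemma p_mono_right:
  assumes ds: "is_dataset m n x" and odd: "odd n" and am: "\<alpha> * m \<ge> 0"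
    and ll: "l \<le> l'" "x (midx n) \<le> l" and lV: "l \<in> Vset m" "l' \<in> Vset m"
  shows "ploss m n x \<alpha> l \<le> ploss m n x \<alpha> l'"
proof -
  obtain a where a: "a \<in> Vset m" "\<bar>a - l'\<bar> \<le> \<alpha> * m" "ploss m n x \<alpha> l' = qloss n x a"
    using p_attained[OF lV(2) am] by blast
  show ?thesis
  proof (cases "\<bar>a - l\<bar> \<le> \<alpha> * m")
    case True then show ?thesis using p_le_q[OF a(1) True] a by simp
  next
    case False
    then have al: "a > l + \<alpha> * m" using a ll by auto
    have a'V: "l + \<alpha> * m \<in> Vset m" using a(1) lV(1) al am unfolding Vset_def by auto
    have "ploss m n x \<alpha> l \<le> qloss n x (l + \<alpha> * m)" using a'V am by (intro p_le_q) auto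
    also have "\<dots> \<le> qloss n x a" using al am ll by (intro q_mono_right[OF ds odd]) auto
    finally show ?thesis using a by simp
  qed
qed

lemma p_left_lb:
  assumes ctm: "in_CTM m n x" and odd: "odd n" and am: "\<alpha> * m \<ge> 0"
    and lV: "l \<in> Vset m" and l: "l < x (midx n) - \<alpha> * m"
  shows "real (midx n - 1) * (x (midx n) - \<alpha> * m - l) \<le> real (ploss m n x \<alpha> l) * m"
proof -
  have ds: "is_dataset m n x" using ctm in_CTM_def by blast
  note kb = kbounds[OF odd]
  define k where "k = midx n"
  obtain a where a: "a \<in> Vset m" "\<bar>a - l\<bar> \<le> \<alpha> * m" "ploss m n x \<alpha> l = qloss n x a"
    using p_attained[OF lV am] by blast
  have xkV: "x k \<in> Vset m" "x 1 \<in> Vset m" using ds_V[OF ds] kb k_def by auto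
  have ak: "a < x k" using a l k_def by auto
  have m0: "m \<ge> 0" using lV unfolding Vset_def by auto
  show ?thesis
  proof (cases "qloss n x a < k")
    case False
    then have "qloss n x a = k" using q_le[OF ds odd, of a] k_def by simp
    have "x k - \<alpha> * m - l \<le> m" using xkV lV am unfolding Vset_def by auto
    then have "real (k - 1) * (x k - \<alpha> * m - l) \<le> real (k-1) * m"
      by (intro mult_left_mono) auto
    also have "\<dots> \<le> real k * m" using m0 by (intro mult_right_mono) auto
    finally show ?thesis using a \<open>qloss n x a = k\<close> k_def by simp
  next
    case True
    define j where "j = qloss n x a"
    have jb: "j \<le> k - 1" "x (k - j) \<le> a" using q_left_bound[OF ds odd, of a] ak True k_def j_def by auto
    have "real (k - 1) * (x k - \<alpha> * m - l) \<le> real (k - 1) * (x k - x (k - j))"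
      using a jb by (intro mult_left_mono) auto
    also have "\<dots> \<le> real j * (x k - x 1)" using ctm_left[OF ctm odd, of j] jb k_def by simp
    also have "\<dots> \<le> real j * m" using xkV unfolding Vset_def by (intro mult_left_mono) auto
    finally show ?thesis using a j_def k_def by simp
  qed
qed

lemma p_right_lb:
  assumes ctm: "in_CTM m n x" and odd: "odd n" and am: "\<alpha> * m \<ge> 0"
    and lV: "l \<in> Vset m" and l: "l > x (midx n) + \<alpha> * m"
  shows "real (midx n - 1) * (l - \<alpha> * m - x (midx n)) \<le> real (ploss m n x \<alpha> l) * m"
proof -
  have ds: "is_dataset m n x" using ctm in_CTM_def by blast
  note kb = kbounds[OF odd]
  define k where "k = midx n"
  obtain a where a: "a \<in> Vset m" "\<bar>a - l\<bar> \<le> \<alpha> * m" "ploss m n x \<alpha> l = qloss n x a"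
    using p_attained[OF lV am] by blast
  have xkV: "x k \<in> Vset m" "x n \<in> Vset m" using ds_V[OF ds] kb k_def by auto
  have ak: "a > x k" using a l k_def by auto
  have m0: "m \<ge> 0" using lV unfolding Vset_def by auto
  show ?thesis
  proof (cases "qloss n x a < k")
    case False
    then have "qloss n x a = k" using q_le[OF ds odd, of a] k_def by simp
    have "l - \<alpha> * m - x k \<le> m" using xkV lV am unfolding Vset_def by auto
    then have "real (k - 1) * (l - \<alpha> * m - x k) \<le> real (k-1) * m"
      by (intro mult_left_mono) auto
    also have "\<dots> \<le> real k * m" using m0 by (intro mult_right_mono) auto
    finally show ?thesis using a \<open>qloss n x a = k\<close> k_def by simp
  next
    case True
    define j where "j = qloss n x a"
    have jb: "j \<le> k - 1" "a \<le> x (k + j)" using q_right_bound[OF ds odd, of a] ak True k_def j_def by auto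
    have "real (k - 1) * (l - \<alpha> * m - x k) \<le> real (k - 1) * (x (k + j) - x k)"
      using a jb by (intro mult_left_mono) auto
    also have "\<dots> \<le> real j * (x n - x k)" using ctm_right[OF ctm odd, of j] jb k_def by simp
    also have "\<dots> \<le> real j * m" using xkV unfolding Vset_def by (intro mult_left_mono) auto
    finally show ?thesis using a j_def k_def by simp
  qed
qed



lemma int_two_mono:
  fixes f :: "real \<Rightarrow> real"
  assumes lo: "a \<le> c" "c \<le> b"
    and L: "\<And>l l'. l \<in> {a..c} \<Longrightarrow> l' \<in> {a..c} \<Longrightarrow> l \<le> l' \<Longrightarrow> f l \<le> f l'"
    and R: "\<And>l l'. l \<in> {c..b} \<Longrightarrow> l' \<in> {c..b} \<Longrightarrow> l \<le> l' \<Longrightarrow> f l' \<le> f l"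
  shows "f integrable_on {a..b}"
proof -
  have 1: "f integrable_on {a..c}"
    by (rule integrable_on_mono_on) (auto simp: mono_on_def intro: L)
  have "(\<lambda>l. - f l) integrable_on {c..b}"
    by (rule integrable_on_mono_on) (auto simp: mono_on_def intro: R)
  then have "(\<lambda>l. - (- f l)) integrable_on {c..b}" by (rule integrable_neg)
  then have 2: "f integrable_on {c..b}" by simp
  show ?thesis by (rule Henstock_Kurzweil_Integration.integrable_combine[OF lo 1 2])
qed

lemma exp_piece_left:
  fixes E c a1 m :: real
  assumes c: "c > 0" and m: "m \<ge> 0"
  shows "((\<lambda>l. E * exp (- c * (a1 - l))) has_integral (E / c - E * exp (- c * m) / c)) {a1 - m..a1}"
proof -
  have "((\<lambda>l. E * exp (- c * (a1 - l))) has_integral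
      ((\<lambda>l. E * exp (- c * (a1 - l)) / c) a1 - (\<lambda>l. E * exp (- c * (a1 - l)) / c) (a1 - m))) {a1 - m..a1}"
  proof (rule fundamental_theorem_of_calculus)
    show "a1 - m \<le> a1" using m by simp
    fix l assume "l \<in> {a1 - m..a1}"
    have "((\<lambda>l. E * exp (- c * (a1 - l)) / c) has_real_derivative (E * (exp (- c * (a1 - l)) * c) / c)) (at l within {a1 - m..a1})"
      by (auto intro!: derivative_eq_intros)
    then show "((\<lambda>l. E * exp (- c * (a1 - l)) / c) has_vector_derivative E * exp (- c * (a1 - l))) (at l within {a1 - m..a1})"
      using c by (simp add: has_real_derivative_iff_has_vector_derivative)
  qed
  then show ?thesis by simp
qed

lemma exp_piece_right:
  fixes E c a2 m :: real
  assumes c: "c > 0" and m: "m \<ge> 0"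
  shows "((\<lambda>l. E * exp (- c * (l - a2))) has_integral (E / c - E * exp (- c * m) / c)) {a2..a2 + m}"
proof -
  have "((\<lambda>l. E * exp (- c * (l - a2))) has_integral
      ((\<lambda>l. - E * exp (- c * (l - a2)) / c) (a2 + m) - (\<lambda>l. - E * exp (- c * (l - a2)) / c) a2)) {a2..a2+m}"
  proof (rule fundamental_theorem_of_calculus)
    show "a2 \<le> a2 + m" using m by simp
    fix l assume "l \<in> {a2..a2+m}"
    have "((\<lambda>l. - E * exp (- c * (l - a2)) / c) has_real_derivative (- E * (exp (- c * (l - a2)) * (- c)) / c)) (at l within {a2..a2+m})"
      by (auto intro!: derivative_eq_intros)
    then show "((\<lambda>l. - E * exp (- c * (l - a2)) / c) has_vector_derivative E * exp (- c * (l - a2))) (at l within {a2..a2+m})"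
      using c by (simp add: has_real_derivative_iff_has_vector_derivative)
  qed
  then show ?thesis by simp
qed



lemma main_lemma:
  fixes m \<beta> \<epsilon> :: real and n :: nat and x :: "nat \<Rightarrow> real"
  assumes m: "m > 0" and b: "0 < \<beta>" "\<beta> < 1/3" and e: "0 < \<epsilon>" "\<epsilon> < 1"
    and odd: "odd n" and nbig: "real n * \<epsilon> \<ge> 2 * ln (1/\<beta>)" and ctm: "in_CTM m n x"
  defines "\<alpha> \<equiv> 1 / (real n * \<epsilon>)"
    and "G \<equiv> {l. real (ploss m n x (1 / (real n * \<epsilon>)) l) \<le> 20 / \<epsilon> * ln (1/\<beta>)}"
  shows "expmed_weight \<epsilon> m n x \<alpha> integrable_on Vset m \<and>
        expmed_weight \<epsilon> m n x \<alpha> integrable_on (Vset m \<inter> G) \<and>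
        expmed_prob \<epsilon> m n x \<alpha> G \<ge> 1 - \<beta>"
proof -
  define L where "L = ln (1/\<beta>)"
  have L3: "L > ln 3" unfolding L_def using b by (subst ln_less_cancel_iff) (auto simp: field_simps)
  have L1: "L > 1" using L3 ln3_gt_1 by linarith
  have ne2: "real n * \<epsilon> > 2" using nbig L1 unfolding L_def by linarith
  have n3: "n \<ge> 3"
  proof -
    have "real n * \<epsilon> \<le> real n" using e by (simp add: mult_left_le)
    then show ?thesis using ne2 by linarith
  qed
  have ds: "is_dataset m n x" using ctm in_CTM_def by blast
  note kb = kbounds[OF odd]
  define k where "k = midx n"
  have kn: "2 * k = n + 1" using midx_odd[OF odd] k_def by simp
  have k2: "k \<ge> 2" using kn n3 by linarith
  define xk where "xk = x k"
  have xkV: "- m / 2 \<le> xk" "xk \<le> m / 2" using ds_V[OF ds, of k] kb k_def xk_def unfolding Vset_def by auto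
  have V: "Vset m = {- m / 2..m / 2}" unfolding Vset_def by simp
  define A where "A = \<alpha> * m"
  have npos: "real n * \<epsilon> > 0" using ne2 by linarith
  have al: "\<alpha> > 0" "\<alpha> < 1/2" unfolding \<alpha>_def using ne2 npos by (auto simp: field_simps)
  have A0: "A > 0" "A < m / 2" unfolding A_def using al m by auto
  have am: "\<alpha> * m \<ge> 0" using al m by simp
  define p where "p = ploss m n x \<alpha>"
  define w where "w = expmed_weight \<epsilon> m n x \<alpha>"
  have w_eq: "\<And>l. w l = exp (- (\<epsilon> / 2) * real (p l))" unfolding w_def p_def expmed_weight_def by simp
  have w0: "\<And>l. w l \<ge> 0" using w_eq by simp
  define T where "T = 20 / \<epsilon> * L"
  have G_eq: "G = {l. real (p l) \<le> T}" unfolding G_def p_def T_def L_def \<alpha>_def by simp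
  define g where "g = (\<lambda>l. if l \<in> G then w l else 0)"
  have g0: "\<And>l. g l \<ge> 0" unfolding g_def using w0 by simp
  have wmono: "\<And>l l'. real (p l') \<le> real (p l) \<Longrightarrow> w l \<le> w l'"
  proof -
    fix l l' assume "real (p l') \<le> real (p l)"
    then have "(\<epsilon> / 2) * real (p l') \<le> (\<epsilon> / 2) * real (p l)" using e by (intro mult_left_mono) auto
    then show "w l \<le> w l'" unfolding w_eq by simp
  qed
  have pL: "\<And>l l'. l \<in> {- m / 2..xk} \<Longrightarrow> l' \<in> {- m / 2..xk} \<Longrightarrow> l \<le> l' \<Longrightarrow> p l' \<le> p l"
    unfolding p_def xk_def k_def using xkV unfolding xk_def k_def
    by (intro p_mono_left[OF ds odd am]) (auto simp: Vset_def)
  have pR: "\<And>l l'. l \<in> {xk..m / 2} \<Longrightarrow> l' \<in> {xk..m / 2} \<Longrightarrow> l \<le> l' \<Longrightarrow> p l \<le> p l'"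
    unfolding p_def xk_def k_def using xkV unfolding xk_def k_def
    by (intro p_mono_right[OF ds odd am]) (auto simp: Vset_def)
  have wint: "w integrable_on {- m / 2..m / 2}"
  proof (rule int_two_mono[OF xkV])
    fix l l' assume "l \<in> {- m / 2..xk}" "l' \<in> {- m / 2..xk}" "l \<le> l'"
    then show "w l \<le> w l'" using pL by (intro wmono) auto
  next
    fix l l' assume "l \<in> {xk..m / 2}" "l' \<in> {xk..m / 2}" "l \<le> l'"
    then show "w l' \<le> w l" using pR by (intro wmono) auto
  qed
  have gint: "g integrable_on {- m / 2..m / 2}"
  proof (rule int_two_mono[OF xkV])
    fix l l' assume *: "l \<in> {- m / 2..xk}" "l' \<in> {- m / 2..xk}" "l \<le> l'"
    show "g l \<le> g l'"
    proof (cases "l \<in> G")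
      case True
      then have "l' \<in> G" using pL[OF *] unfolding G_eq by auto
      then show ?thesis using True pL[OF *] unfolding g_def by (auto intro: wmono)
    next
      case False then show ?thesis unfolding g_def using g0[of l'] g_def by simp
    qed
  next
    fix l l' assume *: "l \<in> {xk..m / 2}" "l' \<in> {xk..m / 2}" "l \<le> l'"
    show "g l' \<le> g l"
    proof (cases "l' \<in> G")
      case True
      then have "l \<in> G" using pR[OF *] unfolding G_eq by auto
      then show ?thesis using True pR[OF *] unfolding g_def by (auto intro: wmono)
    next
      case False then show ?thesis unfolding g_def using g0[of l] g_def by simp
    qed
  qed
  have wGint: "w integrable_on (Vset m \<inter> G)"
    using gint integrable_restrict_Int[where S=G and f=w and T="Vset m"] unfolding g_def V by (simp add: Int_commute)
  have intG: "integral (Vset m \<inter> G) w = integral (Vset m) g"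
    using integral_restrict_Int[where S=G and f=w and T="Vset m"] unfolding g_def by (simp add: Int_commute)

  define E where "E = exp (- (\<epsilon> * T / 4))"
  have eT: "\<epsilon> * T / 4 = 5 * L" unfolding T_def using e by (simp add: field_simps)
  have Lb: "exp (- L) = \<beta>" unfolding L_def using b by (simp add: ln_div exp_minus)
  have Eb: "E = \<beta> ^ 5"
  proof -
    have "E = exp (real 5 * (- L))" unfolding E_def eT by simp
    also have "\<dots> = exp (- L) ^ 5" by (rule exp_of_nat_mult)
    finally show ?thesis using Lb by simp
  qed
  define c where "c = \<epsilon> * real (k - 1) / (4 * m)"
  have c0: "c > 0" unfolding c_def using e m k2 by auto
  define d where "d = (\<lambda>l. max 0 (\<bar>l - xk\<bar> - A))"
  define u where "u = (\<lambda>l. E * exp (- c * d l))"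
  have u0: "\<And>l. u l \<ge> 0" unfolding u_def E_def by simp
  have T0: "T > 0" unfolding T_def using e L1 by simp
  have cd: "\<And>l. l \<in> Vset m \<Longrightarrow> c * d l \<le> \<epsilon> / 4 * real (p l)"
  proof -
    fix l assume lV: "l \<in> Vset m"
    have key: "\<And>D. real (k - 1) * D \<le> real (p l) * m \<Longrightarrow> c * D \<le> \<epsilon> / 4 * real (p l)"
    proof -
      fix D assume "real (k - 1) * D \<le> real (p l) * m"
      then have "\<epsilon> / (4 * m) * (real (k - 1) * D) \<le> \<epsilon> / (4 * m) * (real (p l) * m)"
        using e m by (intro mult_left_mono) auto
      then show "c * D \<le> \<epsilon> / 4 * real (p l)" unfolding c_def using m by (simp add: field_simps)
    qed
    consider "\<bar>l - xk\<bar> \<le> A" | "l < xk - A" | "l > xk + A" by linarith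
    then show "c * d l \<le> \<epsilon> / 4 * real (p l)"
    proof cases
      case 1 then have "d l = 0" unfolding d_def by simp
      then show ?thesis using e by simp
    next
      case 2
      then have "d l = xk - \<alpha> * m - l" using am unfolding d_def A_def by (auto simp: abs_if max_def)
      moreover have "real (k - 1) * (xk - \<alpha> * m - l) \<le> real (p l) * m"
        using p_left_lb[OF ctm odd am lV] 2 unfolding p_def xk_def k_def A_def by simp
      ultimately show ?thesis using key by simp
    next
      case 3
      then have "d l = l - \<alpha> * m - xk" using am unfolding d_def A_def by (auto simp: abs_if max_def)
      moreover have "real (k - 1) * (l - \<alpha> * m - xk) \<le> real (p l) * m"
        using p_right_lb[OF ctm odd am lV] 3 unfolding p_def xk_def k_def A_def by simp
      ultimately show ?thesis using key by simp
    qed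
  qed
  have wg_u: "\<And>l. l \<in> Vset m \<Longrightarrow> w l - g l \<le> u l"
  proof -
    fix l assume lV: "l \<in> Vset m"
    show "w l - g l \<le> u l"
    proof (cases "l \<in> G")
      case True then show ?thesis unfolding g_def using u0 by simp
    next
      case False
      then have pT: "real (p l) > T" unfolding G_eq by simp
      have "\<epsilon> / 4 * T \<le> \<epsilon> / 4 * real (p l)" using pT e by (intro mult_left_mono) auto
      then have "- (\<epsilon> / 2) * real (p l) \<le> - (\<epsilon> * T / 4) + - c * d l" using cd[OF lV] by simp
      then have "exp (- (\<epsilon> / 2) * real (p l)) \<le> exp (- (\<epsilon> * T / 4) + - c * d l)"
        by (simp only: exp_le_cancel_iff)
      also have "\<dots> = E * exp (- c * d l)" unfolding E_def by (rule exp_add)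
      finally have X: "exp (- (\<epsilon> / 2) * real (p l)) \<le> E * exp (- c * d l)" .
      show ?thesis unfolding g_def u_def w_eq using False X by simp
    qed
  qed
  define a0 where "a0 = xk - A - m"
  define a1 where "a1 = xk - A"
  define a2 where "a2 = xk + A"
  define a3 where "a3 = xk + A + m"
  have ucont: "continuous_on S u" for S
    unfolding u_def d_def by (intro continuous_intros)
  have uint: "u integrable_on {a..b}" for a b by (rule integrable_continuous_interval[OF ucont])
  have I1: "integral {a0..a1} u \<le> E / c"
  proof -
    have "((\<lambda>l. E * exp (- c * (a1 - l))) has_integral (E / c - E * exp (- c * m) / c)) {a1 - m..a1}"
      by (rule exp_piece_left) (use c0 m in auto)
    then have "(u has_integral (E / c - E * exp (- c * m) / c)) {a1 - m..a1}"
      by (rule has_integral_eq[rotated]) (use A0 in \<open>auto simp: u_def d_def a0_def a1_def abs_if max_def\<close>)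
    moreover have "a1 - m = a0" unfolding a0_def a1_def by simp
    ultimately have "(u has_integral (E / c - E * exp (- c * m) / c)) {a0..a1}" by simp
    then have "integral {a0..a1} u = E / c - E * exp (- c * m) / c" by (rule integral_unique)
    moreover have "E * exp (- c * m) / c \<ge> 0" using c0 unfolding E_def by simp
    ultimately show ?thesis by linarith
  qed
  have I3: "integral {a2..a3} u \<le> E / c"
  proof -
    have "((\<lambda>l. E * exp (- c * (l - a2))) has_integral (E / c - E * exp (- c * m) / c)) {a2..a2 + m}"
      by (rule exp_piece_right) (use c0 m in auto)
    then have "(u has_integral (E / c - E * exp (- c * m) / c)) {a2..a2 + m}"
      by (rule has_integral_eq[rotated]) (use A0 in \<open>auto simp: u_def d_def a2_def a3_def abs_if max_def\<close>)
    moreover have "a2 + m = a3" unfolding a2_def a3_def by simp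
    ultimately have "(u has_integral (E / c - E * exp (- c * m) / c)) {a2..a3}" by simp
    then have "integral {a2..a3} u = E / c - E * exp (- c * m) / c" by (rule integral_unique)
    moreover have "E * exp (- c * m) / c \<ge> 0" using c0 unfolding E_def by simp
    ultimately show ?thesis by linarith
  qed
  have I2: "integral {a1..a2} u = 2 * A * E"
  proof -
    have "integral {a1..a2} u = integral {a1..a2} (\<lambda>l. E)"
      by (rule integral_cong) (auto simp: u_def d_def a1_def a2_def)
    also have "\<dots> = 2 * A * E" using A0 by (simp add: a1_def a2_def)
    finally show ?thesis .
  qed
  have ord: "a0 \<le> a1" "a1 \<le> a2" "a2 \<le> a3" using A0 m unfolding a0_def a1_def a2_def a3_def by auto
  have Ibig: "integral {a0..a3} u \<le> E * (2 * A + 2 / c)"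
  proof -
    have "integral {a0..a3} u = integral {a0..a1} u + integral {a1..a3} u"
      using ord by (intro Henstock_Kurzweil_Integration.integral_combine[symmetric] uint) auto
    also have "integral {a1..a3} u = integral {a1..a2} u + integral {a2..a3} u"
      using ord by (intro Henstock_Kurzweil_Integration.integral_combine[symmetric] uint) auto
    finally have "integral {a0..a3} u = integral {a0..a1} u + (integral {a1..a2} u + integral {a2..a3} u)" .
    moreover have "E * (2 * A + 2 / c) = 2 * A * E + E / c + E / c" by (simp add: field_simps)
    ultimately show ?thesis using I1 I2 I3 by linarith
  qed
  have Vsub: "{- m / 2..m / 2} \<subseteq> {a0..a3}" using xkV A0 unfolding a0_def a3_def by auto
  have bad: "integral (Vset m) w - integral (Vset m) g \<le> E * (2 * A + 2 / c)"
  proof -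
    have "integral (Vset m) w - integral (Vset m) g = integral (Vset m) (\<lambda>l. w l - g l)"
      using wint gint unfolding V by (simp add: integral_diff)
    also have "\<dots> \<le> integral (Vset m) u"
      using wint gint wg_u unfolding V by (intro integral_le integrable_diff uint) auto
    also have "\<dots> \<le> integral {a0..a3} u"
      unfolding V by (rule integral_subset_le[OF Vsub uint uint]) (use u0 in auto)
    finally show ?thesis using Ibig by linarith
  qed

  have good: "integral (Vset m) w \<ge> A"
  proof -
    obtain s where s: "{s..s + A} \<subseteq> {- m / 2..m / 2}" "{s..s + A} \<subseteq> {xk - A..xk + A}"
    proof (cases "xk + A \<le> m / 2")
      case True then show ?thesis using that[of xk] xkV A0 by auto
    next
      case False then show ?thesis using that[of "xk - A"] xkV A0 by auto
    qed
    have w1: "\<And>l. l \<in> {s..s + A} \<Longrightarrow> w l = 1"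
    proof -
      fix l assume "l \<in> {s..s + A}"
      then have "\<bar>l - x (midx n)\<bar> \<le> \<alpha> * m" using s unfolding xk_def k_def A_def by auto
      then have "p l = 0" unfolding p_def by (rule p_mid[OF ds odd])
      then show "w l = 1" unfolding w_eq by simp
    qed
    have "A = integral {s..s + A} (\<lambda>l. 1::real)" using A0 by simp
    also have "\<dots> = integral {s..s + A} w" by (rule integral_cong) (use w1 in auto)
    also have "\<dots> \<le> integral {- m / 2..m / 2} w"
      by (rule integral_subset_le[OF s(1) integrable_subinterval_real[OF wint s(1)] wint]) (use w0 in auto)
    finally show ?thesis unfolding V .
  qed

  have c_bound: "2 / c \<le> 24 * A"
  proof -
    have kk: "real n \<le> 3 * real (k - 1)" using kn k2 by linarith
    have "2 / c = 8 * m / (\<epsilon> * real (k - 1))" unfolding c_def using m e k2 by (simp add: field_simps)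
    also have "\<dots> \<le> 8 * m / (\<epsilon> * real n / 3)"
    proof (rule frac_le)
      show "0 \<le> 8 * m" using m by simp
      show "0 < \<epsilon> * real n / 3" using e n3 by simp
      have "\<epsilon> * real n \<le> \<epsilon> * (3 * real (k - 1))" using kk e by (intro mult_left_mono) auto
      then show "\<epsilon> * real n / 3 \<le> \<epsilon> * real (k - 1)" by simp
    qed simp
    also have "\<dots> = 24 * m / (\<epsilon> * real n)" by (simp add: field_simps)
    also have "\<dots> = 24 * A" unfolding A_def \<alpha>_def by simp
    finally show ?thesis .
  qed
  have Eb2: "E * 26 \<le> \<beta>"
  proof -
    have "\<beta> ^ 4 \<le> (1/3) ^ 4" using b by (intro power_mono) auto
    moreover have "(1/3::real) ^ 4 = 1/81" by (simp add: eval_nat_numeral)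
    ultimately have "26 * \<beta> ^ 4 \<le> 1" by linarith
    then have "\<beta> * (26 * \<beta> ^ 4) \<le> \<beta> * 1" using b by (intro mult_left_mono) auto
    moreover have "\<beta> * (26 * \<beta> ^ 4) = \<beta> ^ 5 * 26" by (simp add: eval_nat_numeral)
    ultimately show ?thesis unfolding Eb by simp
  qed
  have E0: "E \<ge> 0" unfolding E_def by simp
  have "E * (2 * A + 2 / c) \<le> E * (26 * A)" using c_bound E0 by (intro mult_left_mono) auto
  also have "\<dots> = (E * 26) * A" by simp
  also have "\<dots> \<le> \<beta> * A" using Eb2 A0 by (intro mult_right_mono) auto
  also have "\<dots> \<le> \<beta> * integral (Vset m) w" using good b by (intro mult_left_mono) auto
  finally have fin: "integral (Vset m) w - integral (Vset m) g \<le> \<beta> * integral (Vset m) w"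
    using bad by linarith
  have Ipos: "integral (Vset m) w > 0" using good A0 by linarith
  have "1 - \<beta> \<le> integral (Vset m) g / integral (Vset m) w"
    using fin Ipos by (simp add: field_simps)
  then have prob: "expmed_prob \<epsilon> m n x \<alpha> G \<ge> 1 - \<beta>"
    unfolding expmed_prob_def intG[symmetric] w_def[symmetric] by simp
  show ?thesis using wint wGint prob unfolding V w_def by simp
qed


theorem corollary7p10:
  shows "\<exists>C C'. C > 0 \<and> C' > 0 \<and>
    (\<forall>(m::real) (\<beta>::real) (\<epsilon>::real) (n::nat) (x::nat \<Rightarrow> real).
       m > 0 \<longrightarrow> 0 < \<beta> \<longrightarrow> \<beta> < 1/3 \<longrightarrow> 0 < \<epsilon> \<longrightarrow> \<epsilon> < 1 \<longrightarrow> odd n \<longrightarrow>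
       real n * \<epsilon> \<ge> C * ln (1/\<beta>) \<longrightarrow> in_CTM m n x \<longrightarrow>
       (let \<alpha> = 1 / (real n * \<epsilon>);
            G = {l. real (ploss m n x \<alpha> l) \<le> C' / \<epsilon> * ln (1/\<beta>)} in
        expmed_weight \<epsilon> m n x \<alpha> integrable_on Vset m \<and>
        expmed_weight \<epsilon> m n x \<alpha> integrable_on (Vset m \<inter> G) \<and>
        expmed_prob \<epsilon> m n x \<alpha> G \<ge> 1 - \<beta>))"
proof (rule exI[of _ "2::real"], rule exI[of _ "20::real"], intro conjI allI impI)
  fix m \<beta> \<epsilon> :: real and n :: nat and x :: "nat \<Rightarrow> real"
  assume h: "m > 0" "0 < \<beta>" "\<beta> < 1/3" "0 < \<epsilon>" "\<epsilon> < 1" "odd n"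
    "real n * \<epsilon> \<ge> 2 * ln (1/\<beta>)" "in_CTM m n x"
  show "let \<alpha> = 1 / (real n * \<epsilon>);
            G = {l. real (ploss m n x \<alpha> l) \<le> 20 / \<epsilon> * ln (1/\<beta>)} in
        expmed_weight \<epsilon> m n x \<alpha> integrable_on Vset m \<and>
        expmed_weight \<epsilon> m n x \<alpha> integrable_on (Vset m \<inter> G) \<and>
        expmed_prob \<epsilon> m n x \<alpha> G \<ge> 1 - \<beta>"
    unfolding Let_def using main_lemma[OF h] by simp
qed simp_all

end
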